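(* Under the Setting below, let $\{x^k\}_{k\ge0}$ and $\{y^k\}_{k\ge1}$ be generated by Algorithm 1 with extrapolation weights satisfying $0\le\omega_k\le\omega<1$. Then: (1) $\{H(x^k)\}_{k\ge0}$ is non-increasing; (2) $\sum_{k=1}^\infty\|x^k-y^k\|^2<\infty$, in particular $\|x^k-y^k\|\to0$; (3) the index set $I(x^k)$ changes only finitely often, i.e. there is $k_0$ with $I(x^k)=I(x^{k_0})$ for all $k\ge k_0$; (4) $\sum_{k=1}^\infty\|x^k-x^{k-1}\|^2<\infty$, in particular $\|x^k-x^{k-1}\|\to0$.
   Context: Setting. Let $\lambda>0$, $l,u\in\mathbb{R}^n$ with $l\le u$ componentwise, $X=\{x\in\mathbb{R}^n: l\le x\le u\}$, and $\delta_X$ the indicator function of $X$ ($0$ on $X$, $+\infty$ outside). For $x\in\mathbb{R}^n$, $\|x\|_0$ is the number of nonzero components of $x$ and $I(x)=\{i: x_i=0\}$. Let $f:\mathbb{R}^n\to\mathbb{R}$ be convex and differentiable, bounded from below on $X$, with $\nabla f$ $L$-Lipschitz continuous on $X$ ($L>0$). Define $H(x)=\lambda\|x\|_0+f(x)+\delta_X(x)$. Algorithm 1. Choose $\mu>0$, extrapolation weights $0\le\omega_k\le\omega<1$, and a starting point $x^0\in X$; set $x^{-1}=x^0$. For $k=0,1,2,\dots$: define $y^{k+1}\in\mathbb{R}^n$ by $y^{k+1}_i=x^k_i+\omega_k(x^k_i-x^{k-1}_i)$ for $i\notin I(x^k)$ and $y^{k+1}_i=x^k_i\,(=0)$ for $i\in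 I(x^k)$ (extrapolation only on the support of $x^k$); if $\langle y^{k+1}-x^k,\nabla f(y^{k+1})\rangle>0$ or $y^{k+1}\notin X$, reset $y^{k+1}:=x^k$; then take any $$x^{k+1}\in\arg\min_{x\in X}\ \lambda\|x\|_0+\frac{L}{2}\Big\|x-y^{k+1}+\frac1L\nabla f(y^{k+1})\Big\|^2+\frac{\mu}{2}\|x-y^{k+1}\|^2 .$$ *)

theory Defs
  imports "HOL-Analysis.Analysis"
begin

definition l0norm :: "real^'n \<Rightarrow> nat" where
  "l0norm x = card {i. x $ i \<noteq> 0}"

definition zero_idx :: "real^'n \<Rightarrow> 'n set" where
  "zero_idx x = {i. x $ i = 0}"

definition boxset :: "real^'n \<Rightarrow> real^'n \<Rightarrow> (real^'n) set" where
  "boxset l u = {x. \<forall>i. l $ i \<le> x $ i \<and> x $ i \<le> u $ i}"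

definition Hobj :: "real \<Rightarrow> (real^'n \<Rightarrow> real) \<Rightarrow> real^'n \<Rightarrow> real^'n \<Rightarrow> real^'n \<Rightarrow> ereal" where
  "Hobj lam f l u x = (if x \<in> boxset l u then ereal (lam * real (l0norm x) + f x) else \<infinity>)"

definition extrap :: "real \<Rightarrow> real^'n \<Rightarrow> real^'n \<Rightarrow> real^'n" where
  "extrap w xk xprev = (\<chi> i. if xk $ i = 0 then xk $ i else xk $ i + w * (xk $ i - xprev $ i))"

definition subobj :: "real \<Rightarrow> real \<Rightarrow> real \<Rightarrow> (real^'n \<Rightarrow> real^'n) \<Rightarrow> real^'n \<Rightarrow> real^'n \<Rightarrow> real" where
  "subobj lam L mu g y x = lam * real (l0norm x) + L / 2 * (norm (x - y + (1 / L) *\<^sub>R g y))\<^sup>2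
      + mu / 2 * (norm (x - y))\<^sup>2"

text \<open>One step of Algorithm 1; xprev is x^{k-1} (with x^{-1} = x^0), g is the gradient of f.\<close>
definition alg_step :: "real \<Rightarrow> real \<Rightarrow> real \<Rightarrow> (real^'n \<Rightarrow> real^'n) \<Rightarrow> real^'n \<Rightarrow> real^'n \<Rightarrow> real
   \<Rightarrow> real^'n \<Rightarrow> real^'n \<Rightarrow> real^'n \<Rightarrow> real^'n \<Rightarrow> bool" where
  "alg_step lam L mu g l u w xprev xk ynext xnext \<longleftrightarrow>
     (let yt = extrap w xk xprev in
       ynext = (if inner (yt - xk) (g yt) > 0 \<or> yt \<notin> boxset l u then xk else yt))
     \<and> xnext \<in> boxset l u
     \<and> (\<forall>z \<in> boxset l u. subobj lam L mu g ynext xnext \<le> subobj lam L mu g ynext z)"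

end

theory Submission
  imports Defs
begin


lemma line_deriv:
  fixes f :: "real^'n \<Rightarrow> real" and g :: "real^'n \<Rightarrow> real^'n"
  assumes fgrad: "\<And>z. (f has_derivative (\<lambda>h. inner (g z) h)) (at z)"
  shows "((\<lambda>s. f (a + s *\<^sub>R d)) has_real_derivative inner (g (a + t *\<^sub>R d)) d) (at t)"
proof -
  have h1: "((\<lambda>s. a + s *\<^sub>R d) has_derivative (\<lambda>s. s *\<^sub>R d)) (at t)"
    by (auto intro!: derivative_eq_intros)
  have "((\<lambda>s. f (a + s *\<^sub>R d)) has_derivative (\<lambda>s. inner (g (a + t *\<^sub>R d)) (s *\<^sub>R d))) (at t)"
    using has_derivative_compose[OF h1 fgrad] by simp
  moreover have "(\<lambda>s. inner (g (a + t *\<^sub>R d)) (s *\<^sub>R d)) = (*) (inner (g (a + t *\<^sub>R d)) d)"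
    by (auto simp: fun_eq_iff)
  ultimately show ?thesis by (simp add: has_field_derivative_def)
qed

lemma grad_ineq:
  fixes f :: "real^'n \<Rightarrow> real" and g :: "real^'n \<Rightarrow> real^'n"
  assumes fconv: "convex_on UNIV f"
    and fgrad: "\<And>z. (f has_derivative (\<lambda>h. inner (g z) h)) (at z)"
  shows "f y + inner (g y) (z - y) \<le> f z"
proof -
  define d where "d = z - y"
  define \<phi> where "\<phi> = (\<lambda>s::real. f (y + s *\<^sub>R d))"
  have cv: "convex_on UNIV \<phi>"
  proof (rule convex_onI)
    show "convex (UNIV::real set)" by simp
  next
    fix s t :: real and a b assume "0 < s" "s < 1"
    have "y + ((1 - s) * a + s * b) *\<^sub>R d = (1 - s) *\<^sub>R (y + a *\<^sub>R d) + s *\<^sub>R (y + b *\<^sub>R d)"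
      by (simp add: algebra_simps)
    then show "\<phi> ((1 - s) *\<^sub>R a + s *\<^sub>R b) \<le> (1 - s) * \<phi> a + s * \<phi> b"
      unfolding \<phi>_def using convex_onD[OF fconv, of s "y + a *\<^sub>R d" "y + b *\<^sub>R d"] \<open>0 < s\<close> \<open>s < 1\<close>
      by simp
  qed
  have dv: "(\<phi> has_field_derivative inner (g y) d) (at 0 within UNIV)"
    using line_deriv[OF fgrad, of y d 0] unfolding \<phi>_def by simp
  have "\<phi> 1 - \<phi> 0 \<ge> inner (g y) d * (1 - 0)"
    by (rule convex_on_imp_above_tangent[OF cv _ _ _ dv]) auto
  then show ?thesis unfolding \<phi>_def d_def by simp
qed

lemma box_seg:
  assumes "a \<in> boxset l u" "b \<in> boxset l u" "0 \<le> t" "t \<le> 1"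
  shows "a + t *\<^sub>R (b - a) \<in> boxset l u"
proof -
  have "l $ i \<le> a $ i + t * (b $ i - a $ i) \<and> a $ i + t * (b $ i - a $ i) \<le> u $ i" for i
  proof -
    have A: "l $ i \<le> a $ i" "a $ i \<le> u $ i" "l $ i \<le> b $ i" "b $ i \<le> u $ i"
      using assms(1,2) by (auto simp: boxset_def)
    have e: "a $ i + t * (b $ i - a $ i) = (1 - t) * a $ i + t * b $ i" by algebra
    have "(1 - t) * l $ i \<le> (1 - t) * a $ i" "t * l $ i \<le> t * b $ i"
      "(1 - t) * a $ i \<le> (1 - t) * u $ i" "t * b $ i \<le> t * u $ i"
      using A assms(3,4) by (auto intro: mult_left_mono)
    then show ?thesis unfolding e by (auto simp: algebra_simps)
  qed
  then show ?thesis by (auto simp: boxset_def)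
qed

lemma descent:
  fixes f :: "real^'n \<Rightarrow> real" and g :: "real^'n \<Rightarrow> real^'n"
  assumes fgrad: "\<And>z. (f has_derivative (\<lambda>h. inner (g z) h)) (at z)"
    and glip: "\<forall>a \<in> boxset l u. \<forall>b \<in> boxset l u. norm (g a - g b) \<le> L * norm (a - b)"
    and a: "a \<in> boxset l u" and b: "b \<in> boxset l u" and Lpos: "L \<ge> 0"
  shows "f b \<le> f a + inner (g a) (b - a) + L / 2 * (norm (b - a))\<^sup>2"
proof -
  define d where "d = b - a"
  define h where "h = (\<lambda>s::real. f (a + s *\<^sub>R d) - s * inner (g a) d - L / 2 * s\<^sup>2 * (norm d)\<^sup>2)"
  have "h 0 \<ge> h 1"
  proof (rule DERIV_nonpos_imp_nonincreasing[of 0 1 h])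
    fix t :: real assume t: "0 \<le> t" "t \<le> 1"
    have D: "(h has_real_derivative inner (g (a + t *\<^sub>R d)) d - inner (g a) d - L / 2 * (2 * t) * (norm d)\<^sup>2) (at t)"
      unfolding h_def
      by (auto intro!: derivative_eq_intros line_deriv[OF fgrad])
    have m: "a + t *\<^sub>R d \<in> boxset l u" using box_seg[OF a b t] d_def by simp
    have "inner (g (a + t *\<^sub>R d)) d - inner (g a) d = inner (g (a + t *\<^sub>R d) - g a) d"
      by (simp add: inner_diff_left)
    also have "\<dots> \<le> norm (g (a + t *\<^sub>R d) - g a) * norm d" by (rule norm_cauchy_schwarz)
    also have "\<dots> \<le> L * norm (t *\<^sub>R d) * norm d"
    proof (intro mult_right_mono)
      have "norm (g (a + t *\<^sub>R d) - g a) \<le> L * norm ((a + t *\<^sub>R d) - a)"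
        using glip m a by blast
      then show "norm (g (a + t *\<^sub>R d) - g a) \<le> L * norm (t *\<^sub>R d)" by simp
    qed simp
    also have "\<dots> = L * t * (norm d)\<^sup>2" using t by (simp add: power2_eq_square)
    finally have "inner (g (a + t *\<^sub>R d)) d - inner (g a) d - L / 2 * (2 * t) * (norm d)\<^sup>2 \<le> 0"
      by simp
    with D show "\<exists>y. (h has_real_derivative y) (at t) \<and> y \<le> 0" by blast
  qed simp
  then show ?thesis unfolding h_def d_def by (simp add: algebra_simps)
qed



lemma subobj_expand:
  assumes "L > 0"
  shows "subobj lam L mu G y x = lam * real (l0norm x) + inner (G y) (x - y)
     + (L + mu) / 2 * (norm (x - y))\<^sup>2 + (norm (G y))\<^sup>2 / (2 * L)"
proof -
  have gen: "(norm (a + c *\<^sub>R v))\<^sup>2 = (norm a)\<^sup>2 + 2 * c * inner v a + c\<^sup>2 * (norm v)\<^sup>2"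
    for a v :: "real^'n" and c :: real
    unfolding power2_norm_eq_inner
    by (simp add: inner_add_left inner_add_right inner_commute power2_eq_square algebra_simps)
  have "(norm (x - y + (1 / L) *\<^sub>R G y))\<^sup>2 = (norm (x - y))\<^sup>2 + 2 / L * inner (G y) (x - y) + (norm (G y))\<^sup>2 / L\<^sup>2"
    using gen[of "x - y" "1 / L" "G y"] by (simp add: power_divide)
  then show ?thesis unfolding subobj_def using assms
    by (simp add: field_simps power2_eq_square)
qed

lemma l0_extrap: "l0norm (extrap w xk xp) \<le> l0norm xk"
  unfolding l0norm_def extrap_def
  by (rule card_mono) auto

lemma step_facts:
  fixes f :: "real^'n \<Rightarrow> real" and g :: "real^'n \<Rightarrow> real^'n"
  assumes Lpos: "L > 0" and mu: "mu > 0" and lam: "lam \<ge> 0"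
    and fconv: "convex_on UNIV f"
    and fgrad: "\<And>z. (f has_derivative (\<lambda>h. inner (g z) h)) (at z)"
    and glip: "\<forall>a \<in> boxset l u. \<forall>b \<in> boxset l u. norm (g a - g b) \<le> L * norm (a - b)"
    and w: "0 \<le> w"
    and xk: "xk \<in> boxset l u"
    and st: "alg_step lam L mu g l u w xp xk y' x'"
  shows "x' \<in> boxset l u" "y' \<in> boxset l u"
    "lam * real (l0norm x') + f x' + mu / 2 * (norm (x' - y'))\<^sup>2 \<le> lam * real (l0norm xk) + f xk"
    "norm (y' - xk) \<le> w * norm (xk - xp)"
    "l0norm y' \<le> l0norm xk"
    "inner (y' - xk) (g y') \<le> 0"
proof -
  define yt where "yt = extrap w xk xp"
  have y': "y' = (if inner (yt - xk) (g yt) > 0 \<or> yt \<notin> boxset l u then xk else yt)"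
    and x'b: "x' \<in> boxset l u"
    and opt: "\<forall>z \<in> boxset l u. subobj lam L mu g y' x' \<le> subobj lam L mu g y' z"
    using st unfolding alg_step_def yt_def Let_def by auto
  show "x' \<in> boxset l u" by (rule x'b)
  show yb: "y' \<in> boxset l u" using y' xk by auto
  show l0: "l0norm y' \<le> l0norm xk" using y' l0_extrap[of w xk xp] yt_def by auto
  show inn: "inner (y' - xk) (g y') \<le> 0" using y' by auto
  show "norm (y' - xk) \<le> w * norm (xk - xp)"
  proof (cases "y' = xk")
    case True then show ?thesis using w by simp
  next
    case False
    then have "y' = yt" using y' by auto
    have "norm (yt - xk) \<le> norm (w *\<^sub>R (xk - xp))"
    proof (rule norm_le_componentwise_cart)
      fix i
      show "norm ((yt - xk) $ i) \<le> norm ((w *\<^sub>R (xk - xp)) $ i)"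
        unfolding yt_def extrap_def by auto
    qed
    then show ?thesis using \<open>y' = yt\<close> w by simp
  qed
  have o1: "subobj lam L mu g y' x' \<le> subobj lam L mu g y' y'" using opt yb by blast
  have e1: "subobj lam L mu g y' x' = lam * real (l0norm x') + inner (g y') (x' - y')
     + (L + mu) / 2 * (norm (x' - y'))\<^sup>2 + (norm (g y'))\<^sup>2 / (2 * L)"
    by (rule subobj_expand[OF Lpos])
  have e2: "subobj lam L mu g y' y' = lam * real (l0norm y') + (norm (g y'))\<^sup>2 / (2 * L)"
    using subobj_expand[OF Lpos, of lam mu g y' y'] by simp
  have d: "f x' \<le> f y' + inner (g y') (x' - y') + L / 2 * (norm (x' - y'))\<^sup>2"
    by (rule descent[OF fgrad glip yb x'b]) (use Lpos in simp)
  have c: "f y' + inner (g y') (xk - y') \<le> f xk" by (rule grad_ineq[OF fconv fgrad])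
  have i2: "inner (g y') (xk - y') \<ge> 0" using inn
    by (metis inner_commute inner_minus_left minus_diff_eq neg_le_0_iff_le)
  have ll: "lam * real (l0norm y') \<le> lam * real (l0norm xk)"
    using l0 lam by (auto intro: mult_left_mono)
  show "lam * real (l0norm x') + f x' + mu / 2 * (norm (x' - y'))\<^sup>2 \<le> lam * real (l0norm xk) + f xk"
    using o1 e1 e2 d c i2 ll by (simp add: field_simps)
qed



definition mabs :: "real \<Rightarrow> real" where "mabs r = (if r = 0 then 1 else \<bar>r\<bar>)"

lemma oneD_pos:
  fixes lam c v l u a :: real
  assumes lam: "lam > 0" and c: "c > 0" and la: "l \<le> a" and au: "a \<le> u" and a: "a > 0"
    and opt: "\<And>t. l \<le> t \<Longrightarrow> t \<le> u \<Longrightarrow>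
       lam + c/2*(a-v)\<^sup>2 \<le> lam*(if t=0 then 0 else 1) + c/2*(t-v)\<^sup>2"
  shows "min (sqrt (2*lam/c)) (min (mabs l) (mabs u)) \<le> a"
proof (cases "l > 0")
  case True then show ?thesis using la by (simp add: mabs_def min_le_iff_disj)
next
  case False
  then have l0: "l \<le> 0" by simp
  have va: "v \<ge> a"
  proof (rule ccontr)
    assume "\<not> v \<ge> a" then have va: "v < a" by simp
    show False
    proof (cases "v > 0")
      case True
      have "lam + c/2*(a-v)\<^sup>2 \<le> lam + c/2*(v-v)\<^sup>2" using opt[of v] True va l0 au by simp
      moreover have "(a-v)\<^sup>2 > 0" using va by simp
      moreover have "c * (a-v)\<^sup>2 > 0" using c calculation(2) by simp
      ultimately show False by simp
    next
      case False
      have "lam + c/2*(a-v)\<^sup>2 \<le> c/2*(0-v)\<^sup>2" using opt[of 0] l0 au a by simp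
      moreover have "(a-v)\<^sup>2 \<ge> (0-v)\<^sup>2" using False a
        by (simp add: power2_eq_square algebra_simps)
      moreover have "c/2*(a-v)\<^sup>2 \<ge> c/2*(0-v)\<^sup>2" using calculation(2) c by simp
      ultimately show False using lam by simp
    qed
  qed
  show ?thesis
  proof (cases "a = u")
    case True then show ?thesis using a by (simp add: mabs_def min_le_iff_disj)
  next
    case False
    then have au': "a < u" using au by simp
    have "v = a"
    proof (rule ccontr)
      assume "v \<noteq> a" then have "v > a" using va by simp
      define t where "t = min u v"
      have t: "a < t" "t \<le> v" "l \<le> t" "t \<le> u" "t \<noteq> 0" using au' \<open>v > a\<close> la a by (auto simp: t_def)
      have "lam + c/2*(a-v)\<^sup>2 \<le> lam + c/2*(t-v)\<^sup>2" using opt[OF t(3,4)] t(5) by simp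
      moreover have "(v-t)\<^sup>2 < (v-a)\<^sup>2" using t
        by (intro power_strict_mono) auto
      then have "(t-v)\<^sup>2 < (a-v)\<^sup>2" by (simp add: power2_commute)
      ultimately show False using c by simp
    qed
    then have "lam \<le> c/2*a\<^sup>2" using opt[of 0] l0 au a by simp
    then have "2*lam/c \<le> a\<^sup>2" using c by (simp add: field_simps)
    then have "sqrt (2*lam/c) \<le> a" using a by (simp add: real_le_lsqrt real_sqrt_le_iff)
    then show ?thesis by (simp add: min_le_iff_disj)
  qed
qed

lemma oneD:
  fixes lam c v l u a :: real
  assumes lam: "lam > 0" and c: "c > 0" and la: "l \<le> a" and au: "a \<le> u" and a: "a \<noteq> 0"
    and opt: "\<And>t. l \<le> t \<Longrightarrow> t \<le> u \<Longrightarrow>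
       lam + c/2*(a-v)\<^sup>2 \<le> lam*(if t=0 then 0 else 1) + c/2*(t-v)\<^sup>2"
  shows "min (sqrt (2*lam/c)) (min (mabs l) (mabs u)) \<le> \<bar>a\<bar>"
proof (cases "a > 0")
  case True then show ?thesis using oneD_pos[OF lam c la au True opt] by simp
next
  case False
  then have a': "-a > 0" using a by simp
  have "min (sqrt (2*lam/c)) (min (mabs (-u)) (mabs (-l))) \<le> -a"
  proof (rule oneD_pos[OF lam c _ _ a', where v = "-v"])
    show "- u \<le> - a" "- a \<le> - l" using la au by auto
    fix t assume "- u \<le> t" "t \<le> - l"
    then have "lam + c/2*(a-v)\<^sup>2 \<le> lam*(if -t=0 then 0 else 1) + c/2*(-t-v)\<^sup>2"
      using opt[of "-t"] by simp
    moreover have "(-a - -v)\<^sup>2 = (a-v)\<^sup>2" "(t - -v)\<^sup>2 = (-t-v)\<^sup>2"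
      by (simp_all add: power2_eq_square algebra_simps)
    ultimately show "lam + c/2*(-a - -v)\<^sup>2 \<le> lam*(if t=0 then 0 else 1) + c/2*(t - -v)\<^sup>2"
      by simp
  qed
  moreover have "mabs (-r) = mabs r" for r by (simp add: mabs_def)
  moreover have "\<bar>a\<bar> = -a" using False by simp
  ultimately show ?thesis by (simp add: min.commute[of "mabs l"])
qed

definition psi :: "real \<Rightarrow> real \<Rightarrow> real \<Rightarrow> real \<Rightarrow> real \<Rightarrow> real \<Rightarrow> real" where
  "psi lam L mu G Y X = lam*(if X=0 then 0 else 1) + L/2*(X - Y + G/L)\<^sup>2 + mu/2*(X-Y)\<^sup>2"

lemma norm_sq_vec: "(norm (x::real^'n))\<^sup>2 = (\<Sum>i\<in>UNIV. (x$i)\<^sup>2)"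
  unfolding power2_norm_eq_inner inner_vec_def by (simp add: power2_eq_square)

lemma l0_sum: "real (l0norm (x::real^'n)) = (\<Sum>i\<in>UNIV. (if x$i=0 then 0 else 1))"
proof -
  have "(\<Sum>i\<in>UNIV. (if x$i=0 then 0 else 1::real)) = (\<Sum>i\<in>UNIV. (if x$i\<noteq>0 then 1 else 0))"
    by (rule sum.cong) auto
  also have "\<dots> = real (card {i. x$i\<noteq>0})"
    using sum.inter_filter[of UNIV "\<lambda>_. 1::real" "\<lambda>i. x$i\<noteq>0"] by simp
  finally show ?thesis unfolding l0norm_def by simp
qed

lemma subobj_sep: "subobj lam L mu G y x = (\<Sum>i\<in>UNIV. psi lam L mu (G y $ i) (y $ i) (x $ i))"
  unfolding subobj_def psi_def norm_sq_vec l0_sum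
  by (simp add: sum.distrib sum_distrib_left)

lemma psi_diff:
  assumes "L > 0" "mu > 0"
  shows "psi lam L mu G Y X - psi lam L mu G Y Z =
    lam*(if X=0 then 0 else 1) - lam*(if Z=0 then 0 else 1)
    + (L+mu)/2*((X - (Y - G/(L+mu)))\<^sup>2 - (Z - (Y - G/(L+mu)))\<^sup>2)"
proof -
  have k: "L/2*(r + G/L)\<^sup>2 + mu/2*(r)\<^sup>2 = (L+mu)/2*(r + G/(L+mu))\<^sup>2 + ((G)\<^sup>2/(2*L) - (G)\<^sup>2/(2*(L+mu)))"
    for r :: real
  proof -
    define c where "c = L + mu"
    have c0: "c > 0" using assms by (simp add: c_def)
    have mu': "mu = c - L" by (simp add: c_def)
    have "L/2*(r + G/L)\<^sup>2 + (c - L)/2*(r)\<^sup>2 = c/2*(r + G/c)\<^sup>2 + ((G)\<^sup>2/(2*L) - (G)\<^sup>2/(2*c))"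
      using assms(1) c0 by (simp add: power2_eq_square field_simps)
    then show ?thesis unfolding mu' by (simp add: c_def)
  qed
  show ?thesis unfolding psi_def using k[of "X - Y"] k[of "Z - Y"]
    by (simp add: algebra_simps)
qed

definition delta :: "real \<Rightarrow> real \<Rightarrow> real \<Rightarrow> real^'n \<Rightarrow> real^'n \<Rightarrow> 'n \<Rightarrow> real" where
  "delta lam L mu l u j = min (sqrt (2*lam/(L+mu))) (min (mabs (l$j)) (mabs (u$j)))"

lemma delta_pos: "lam > 0 \<Longrightarrow> L > 0 \<Longrightarrow> mu > 0 \<Longrightarrow> delta lam L mu l u j > 0"
  unfolding delta_def mabs_def by auto

lemma threshold:
  assumes lam: "lam > 0" and Lpos: "L > 0" and mu: "mu > 0"
    and xb: "x' \<in> boxset l u"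
    and opt: "\<forall>z \<in> boxset l u. subobj lam L mu G y x' \<le> subobj lam L mu G y z"
    and nz: "x' $ j \<noteq> 0"
  shows "delta lam L mu l u j \<le> \<bar>x' $ j\<bar>"
proof -
  let ?p = "\<lambda>i X. psi lam L mu (G y $ i) (y $ i) X"
  let ?c = "L + mu" and ?v = "y $ j - G y $ j / (L + mu)"
  have compt: "?p j (x' $ j) \<le> ?p j t" if t: "l $ j \<le> t" "t \<le> u $ j" for t
  proof -
    define z where "z = (\<chi> i. if i = j then t else x' $ i)"
    have zb: "z \<in> boxset l u" using xb t by (auto simp: boxset_def z_def)
    have s1: "subobj lam L mu G y x' = ?p j (x' $ j) + (\<Sum>i\<in>UNIV - {j}. ?p i (x' $ i))"
      unfolding subobj_sep by (rule sum.remove) auto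
    have s2: "subobj lam L mu G y z = ?p j t + (\<Sum>i\<in>UNIV - {j}. ?p i (x' $ i))"
    proof -
      have "subobj lam L mu G y z = ?p j (z $ j) + (\<Sum>i\<in>UNIV - {j}. ?p i (z $ i))"
        unfolding subobj_sep by (rule sum.remove) auto
      moreover have "(\<Sum>i\<in>UNIV - {j}. ?p i (z $ i)) = (\<Sum>i\<in>UNIV - {j}. ?p i (x' $ i))"
        by (rule sum.cong) (auto simp: z_def)
      ultimately show ?thesis by (simp add: z_def)
    qed
    show ?thesis using opt zb s1 s2 by auto
  qed
  have "min (sqrt (2*lam/?c)) (min (mabs (l$j)) (mabs (u$j))) \<le> \<bar>x' $ j\<bar>"
  proof (rule oneD[OF lam _ _ _ nz, where v = ?v])
    show "0 < ?c" using Lpos mu by simp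
    show "l $ j \<le> x' $ j" "x' $ j \<le> u $ j" using xb by (auto simp: boxset_def)
    fix t assume t: "l $ j \<le> t" "t \<le> u $ j"
    have "?p j (x' $ j) - ?p j t \<le> 0" using compt[OF t] by simp
    then show "lam + ?c/2*(x' $ j - ?v)\<^sup>2 \<le> lam*(if t=0 then 0 else 1) + ?c/2*(t - ?v)\<^sup>2"
      unfolding psi_diff[OF Lpos mu] using nz by (simp add: algebra_simps)
  qed
  then show ?thesis unfolding delta_def .
qed



lemma sq_ineq:
  fixes a b p om :: real
  assumes "a \<le> b + om * p" "0 \<le> b" "0 \<le> p" "0 \<le> om" "om < 1" "0 \<le> a"
  shows "a\<^sup>2 \<le> b\<^sup>2 / (1 - om) + om * p\<^sup>2"
proof -
  have "a\<^sup>2 \<le> (b + om * p)\<^sup>2" using assms by (intro power_mono) auto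
  also have "(1 - om) * (b + om * p)\<^sup>2 \<le> (1 - om) * (b\<^sup>2 / (1 - om) + om * p\<^sup>2)"
  proof -
    have "(1 - om) * (b\<^sup>2 / (1 - om) + om * p\<^sup>2) - (1 - om) * (b + om * p)\<^sup>2 = om * (b - (1 - om) * p)\<^sup>2"
      using assms by (simp add: field_simps power2_eq_square)
    moreover have "om * (b - (1 - om) * p)\<^sup>2 \<ge> 0" using assms by simp
    ultimately show ?thesis by linarith
  qed
  then have "(b + om * p)\<^sup>2 \<le> b\<^sup>2 / (1 - om) + om * p\<^sup>2" using assms by simp
  finally show ?thesis .
qed

theorem lemma2p5:
  fixes f :: "real^'n \<Rightarrow> real" and g :: "real^'n \<Rightarrow> real^'n"
    and l u :: "real^'n" and lam L mu \<omega> :: real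
    and w :: "nat \<Rightarrow> real" and x y :: "nat \<Rightarrow> real^'n"
  assumes lam: "lam > 0" and Lpos: "L > 0" and mu: "mu > 0"
    and lu: "\<forall>i. l $ i \<le> u $ i"
    and fconv: "convex_on UNIV f"
    and fgrad: "\<And>z. (f has_derivative (\<lambda>h. inner (g z) h)) (at z)"
    and fbdd: "\<exists>c. \<forall>z \<in> boxset l u. c \<le> f z"
    and glip: "\<forall>a \<in> boxset l u. \<forall>b \<in> boxset l u. norm (g a - g b) \<le> L * norm (a - b)"
    and wk: "\<And>k. 0 \<le> w k \<and> w k \<le> \<omega>" and om: "\<omega> < 1"
    and x0: "x 0 \<in> boxset l u"
    and step: "\<And>k. alg_step lam L mu g l u (w k) (if k = 0 then x 0 else x (k - 1)) (x k)
                  (y (Suc k)) (x (Suc k))"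
  shows "(\<forall>k. Hobj lam f l u (x (Suc k)) \<le> Hobj lam f l u (x k))
    \<and> summable (\<lambda>k. (norm (x (Suc k) - y (Suc k)))\<^sup>2)
    \<and> (\<lambda>k. norm (x (Suc k) - y (Suc k))) \<longlonglongrightarrow> 0
    \<and> (\<exists>k0. \<forall>k\<ge>k0. zero_idx (x k) = zero_idx (x k0))
    \<and> summable (\<lambda>k. (norm (x (Suc k) - x k))\<^sup>2)
    \<and> (\<lambda>k. norm (x (Suc k) - x k)) \<longlonglongrightarrow> 0"
proof -
  define xp where "xp k = (if k = 0 then x 0 else x (k - 1))" for k
  define F where "F z = lam * real (l0norm z) + f z" for z
  define d where "d k = (norm (x (Suc k) - y (Suc k)))\<^sup>2" for k
  define a where "a k = norm (x (Suc k) - x k)" for k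
  have om0: "0 \<le> \<omega>" using wk[of 0] by simp
  have xb: "x k \<in> boxset l u" for k
  proof (induction k)
    case 0 then show ?case using x0 .
  next
    case (Suc k)
    show ?case using step_facts(1)[OF Lpos mu _ fconv fgrad glip _ Suc step[of k]] lam wk[of k] by simp
  qed
  have SF: "lam * real (l0norm (x (Suc k))) + f (x (Suc k)) + mu / 2 * (norm (x (Suc k) - y (Suc k)))\<^sup>2
      \<le> lam * real (l0norm (x k)) + f (x k)"
    "norm (y (Suc k) - x k) \<le> w k * norm (x k - xp k)" for k
    using step_facts(3,4)[OF Lpos mu _ fconv fgrad glip _ xb[of k] step[of k]] lam wk[of k]
    by (simp_all add: xp_def)
  have S: "F (x (Suc k)) + mu / 2 * d k \<le> F (x k)" for k
    using SF(1)[of k] unfolding F_def d_def .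
  have d0: "0 \<le> d k" for k unfolding d_def by simp
  obtain c where c: "\<forall>z \<in> boxset l u. c \<le> f z" using fbdd by blast
  have Fb: "c \<le> F (x k)" for k
    using c xb[of k] lam unfolding F_def by (simp add: add_increasing)
  have P1: "\<forall>k. Hobj lam f l u (x (Suc k)) \<le> Hobj lam f l u (x k)"
  proof
    fix k
    have "mu / 2 * d k \<ge> 0" using d0[of k] mu by simp
    then have "F (x (Suc k)) \<le> F (x k)" using S[of k] by linarith
    then show "Hobj lam f l u (x (Suc k)) \<le> Hobj lam f l u (x k)"
      using xb[of k] xb[of "Suc k"] unfolding Hobj_def F_def by simp
  qed
  have tel: "mu / 2 * (\<Sum>k<N. d k) \<le> F (x 0) - F (x N)" for N
  proof (induction N)
    case 0 then show ?case by simp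
  next
    case (Suc N) then show ?case using S[of N] by (simp add: distrib_left)
  qed
  have dsum: "summable d"
  proof (rule summableI_nonneg_bounded[OF d0])
    fix N
    have "mu / 2 * (\<Sum>k<N. d k) \<le> F (x 0) - c" using tel[of N] Fb[of N] by simp
    then show "(\<Sum>k<N. d k) \<le> (F (x 0) - c) * 2 / mu" using mu by (simp add: field_simps)
  qed
  have dlim: "(\<lambda>k. norm (x (Suc k) - y (Suc k))) \<longlonglongrightarrow> 0"
  proof -
    have "(\<lambda>k. sqrt (d k)) \<longlonglongrightarrow> sqrt 0"
      by (intro tendsto_real_sqrt summable_LIMSEQ_zero[OF dsum])
    then show ?thesis unfolding d_def by simp
  qed
  define p where "p k = (if k = 0 then 0 else a (k - 1))" for k
  have a0: "0 \<le> a k" for k unfolding a_def by simp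
  have p0: "0 \<le> p k" for k unfolding p_def using a0 by simp
  have ab: "a k \<le> sqrt (d k) + \<omega> * p k" for k
  proof -
    have "a k \<le> norm (x (Suc k) - y (Suc k)) + norm (y (Suc k) - x k)"
      unfolding a_def by (metis diff_add_cancel norm_triangle_ineq add.commute diff_diff_eq2 add_diff_eq)
    also have "norm (y (Suc k) - x k) \<le> \<omega> * p k"
    proof -
      have "norm (x k - xp k) = p k" unfolding xp_def p_def a_def by (cases k) auto
      moreover have "w k * p k \<le> \<omega> * p k" using wk[of k] p0[of k] by (simp add: mult_right_mono)
      ultimately show ?thesis using SF(2)[of k] by simp
    qed
    then have "norm (x (Suc k) - y (Suc k)) + norm (y (Suc k) - x k) \<le> sqrt (d k) + \<omega> * p k"
      unfolding d_def by simp
    finally show ?thesis .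
  qed
  have asq: "(a k)\<^sup>2 \<le> d k / (1 - \<omega>) + \<omega> * (p k)\<^sup>2" for k
    using sq_ineq[OF ab[of k] _ p0 om0 om a0] d0[of k] by simp
  have psum: "(\<Sum>k<Suc N. (p k)\<^sup>2) = (\<Sum>k<N. (a k)\<^sup>2)" for N
    by (induction N) (auto simp: p_def)
  have asumm: "summable (\<lambda>k. (a k)\<^sup>2)"
  proof (rule summableI_nonneg_bounded)
    fix N
    have e1: "(\<Sum>k<N. (a k)\<^sup>2) \<le> (\<Sum>k<N. d k / (1 - \<omega>) + \<omega> * (p k)\<^sup>2)"
      by (rule sum_mono) (rule asq)
    have e2: "(\<Sum>k<N. d k / (1 - \<omega>) + \<omega> * (p k)\<^sup>2) = (\<Sum>k<N. d k) / (1 - \<omega>) + \<omega> * (\<Sum>k<N. (p k)\<^sup>2)"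
      by (simp add: sum.distrib sum_distrib_left sum_divide_distrib)
    have e3: "(\<Sum>k<N. (p k)\<^sup>2) \<le> (\<Sum>k<N. (a k)\<^sup>2)"
    proof -
      have h0: "(p N)\<^sup>2 \<ge> 0" by simp
      have h: "(\<Sum>k<N. (p k)\<^sup>2) + (p N)\<^sup>2 = (\<Sum>k<N. (a k)\<^sup>2)" using psum[of N] by simp
      from h h0 show ?thesis by linarith
    qed
    have e4: "(\<Sum>k<N. d k) \<le> suminf d" by (rule sum_le_suminf[OF dsum]) (use d0 in auto)
    have e5: "(\<Sum>k<N. d k) / (1 - \<omega>) \<le> suminf d / (1 - \<omega>)"
      using e4 om by (simp add: divide_right_mono)
    have e6: "\<omega> * (\<Sum>k<N. (p k)\<^sup>2) \<le> \<omega> * (\<Sum>k<N. (a k)\<^sup>2)"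
      using e3 om0 by (simp add: mult_left_mono)
    have "(\<Sum>k<N. (a k)\<^sup>2) \<le> suminf d / (1 - \<omega>) + \<omega> * (\<Sum>k<N. (a k)\<^sup>2)"
      using e1 e2 e5 e6 by linarith
    then have "(1 - \<omega>) * (\<Sum>k<N. (a k)\<^sup>2) \<le> suminf d / (1 - \<omega>)" by (simp add: algebra_simps)
    then have "(1 - \<omega>) * (\<Sum>k<N. (a k)\<^sup>2) / (1 - \<omega>) \<le> suminf d / (1 - \<omega>) / (1 - \<omega>)"
      using om by (intro divide_right_mono) auto
    then show "(\<Sum>k<N. (a k)\<^sup>2) \<le> suminf d / (1 - \<omega>) / (1 - \<omega>)"
      using om by simp
  qed simp
  have alim: "a \<longlonglongrightarrow> 0"
  proof -
    have "(\<lambda>k. sqrt ((a k)\<^sup>2)) \<longlonglongrightarrow> sqrt 0"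
      by (intro tendsto_real_sqrt summable_LIMSEQ_zero[OF asumm])
    then show ?thesis using a0 by simp
  qed
  define \<delta> where "\<delta> = Min (range (delta lam L mu l u))"
  have dpos: "\<delta> > 0" unfolding \<delta>_def using delta_pos[OF lam Lpos mu, of l u] by auto
  have thr: "\<delta> \<le> \<bar>x (Suc k) $ j\<bar>" if "x (Suc k) $ j \<noteq> 0" for k j
  proof -
    have opt: "\<forall>z \<in> boxset l u. subobj lam L mu g (y (Suc k)) (x (Suc k)) \<le> subobj lam L mu g (y (Suc k)) z"
      using step[of k] unfolding alg_step_def by auto
    have "\<delta> \<le> delta lam L mu l u j" unfolding \<delta>_def by simp
    also have "\<dots> \<le> \<bar>x (Suc k) $ j\<bar>" by (rule threshold[OF lam Lpos mu xb opt that])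
    finally show ?thesis .
  qed
  obtain K where K: "\<And>k. k \<ge> K \<Longrightarrow> a k < \<delta>"
    using order_tendstoD(2)[OF alim dpos] unfolding eventually_sequentially by blast
  have same: "zero_idx (x (Suc (Suc k))) = zero_idx (x (Suc k))" if "k \<ge> K" for k
  proof -
    have ak: "a (Suc k) < \<delta>" using K that by simp
    have comp: "\<bar>x (Suc (Suc k)) $ j - x (Suc k) $ j\<bar> < \<delta>" for j
      using component_le_norm_cart[of "x (Suc (Suc k)) - x (Suc k)" j] ak unfolding a_def by simp
    have "x (Suc (Suc k)) $ j = 0 \<longleftrightarrow> x (Suc k) $ j = 0" for j
    proof
      assume h: "x (Suc (Suc k)) $ j = 0"
      show "x (Suc k) $ j = 0"
      proof (rule ccontr)
        assume "x (Suc k) $ j \<noteq> 0"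
        then show False using thr[of k j] comp[of j] h by simp
      qed
    next
      assume h: "x (Suc k) $ j = 0"
      show "x (Suc (Suc k)) $ j = 0"
      proof (rule ccontr)
        assume "x (Suc (Suc k)) $ j \<noteq> 0"
        then show False using thr[of "Suc k" j] comp[of j] h by simp
      qed
    qed
    then show ?thesis unfolding zero_idx_def by auto
  qed
  have P3: "\<forall>k\<ge>Suc K. zero_idx (x k) = zero_idx (x (Suc K))"
  proof (intro allI impI)
    fix k assume "Suc K \<le> k"
    then show "zero_idx (x k) = zero_idx (x (Suc K))"
    proof (induction k rule: dec_induct)
      case base then show ?case by simp
    next
      case (step m)
      then obtain m' where m': "m = Suc m'" "m' \<ge> K" by (cases m) auto
      then show ?case using same[of m'] step.IH by simp
    qed
  qed
  show ?thesis
    using P1 dsum dlim P3 asumm alim unfolding d_def a_def by blast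
qed


end
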